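(* Let $(\mathcal A,\varphi,\mathcal F,\Phi)$ be a ncps of type B$'$ with associated infinitesimal ncps $(\mathcal B,\varphi,\varphi')$. Let $a_1,a_2\in\mathcal A$ and $f_1,f_2\in\mathcal F$ and assume that $(\{a_1,a_2\},\{f_1,f_2\})$ is B$'$-free, i.e. with $\mathcal A_i$ the unital subalgebra generated by $a_i$ and $\mathcal F_j$ the subalgebra generated by $f_j$, the pair $((\mathcal A_i)_{i=1,2},(\mathcal F_j)_{j=1,2})$ is B$'$-free. Let $b_i=a_i+f_i\in\mathcal B$. If $a_i$ has distribution $\mu_i$ w.r.t. $\varphi$ and $f_i$ has distribution $\nu_i$ w.r.t. $\varphi'$ ($i=1,2$), then the infinitesimal distribution of $b_1+b_2$ w.r.t. $(\varphi,\varphi')$ is $(\mu_1\boxplus\mu_2,\nu)$, where $\nu$ is characterized by $$G_\nu(z)=G_{\nu_1+\nu_2}(F_{\mu_1\boxplus\mu_2}(z))\,F_{\mu_1\boxplus\mu_2}'(z).$$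
   Context: Ncps of type B$'$ $(\mathcal A,\varphi,\mathcal F,\Phi)$: $\mathcal A$ unital complex algebra, $\varphi(1_{\mathcal A})=1$, $\mathcal F$ an algebra which is an $\mathcal A$-bimodule compatible with its multiplication, $\Phi:\mathcal F\to\mathbb C$ linear. $\mathcal B=\mathcal A\oplus\mathcal F$ with product $(a_1,f_1)(a_2,f_2)=(a_1a_2,a_1f_2+f_1a_2+f_1f_2)$; $\varphi(a+f):=\varphi(a)$, $\varphi'(a+f):=\Phi(f)$. For unital subalgebras $(\mathcal A_i)_{i\in I}$ of $\mathcal A$ and subalgebras $(\mathcal F_j)_{j\in J}$ of $\mathcal F$, the pair is B$'$-free if: (i) $(\mathcal A_i)$ are free w.r.t. $\varphi$ ($\varphi(c_1\cdots c_n)=0$ for alternating indices and centered $c_l\in\mathcal A_{i_l}$); (ii) with $\mathcal A_0$ the algebra generated by all $\mathcal A_i$ and $\mathcal F_0$ the algebra generated by all $\mathcal F_j$, $\Phi(c_0g_1c_1\cdots c_{n-1}g_nc_n)=\varphi(c_0c_n)\prod_{l=1}^{n-1}\varphi(c_l)\,\Phi(g_1\cdots g_n)$ for $c_l\in\mathcal A_0$, $g_l\in\mathcal F_0$ (cyclic-antimonotone independence); (iii) $\Phi(g_1\cdots g_n)=0$ whenever $n\ge2$, $j_1\ne j_2\ne\cdots\ne j_n$, $g_l\in\mathcal F_{j_l}$ (trivial independence). The distribution of $b$ w.r.t. $\omega$ is the functional $x^n\mapsto\omega(b^n)$ on $\mathbb C[x]$ ($b^0=1$); infinitesimal distribution w.r.t.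 $(\varphi,\varphi')$ is the pair. $\mu_1\boxplus\mu_2$ is the free convolution (distribution of the sum of two free elements with distributions $\mu_1,\mu_2$). $G_\mu(z)=\sum_{n\ge0}\mu(x^n)z^{-n-1}$, $F_\mu=1/G_\mu$, as formal series; $\nu_1+\nu_2$ is the sum of linear functionals. *)

theory Defs
  imports Main "HOL-Computational_Algebra.Formal_Laurent_Series"
begin

text \<open>The algebra A is a type 'a of class ring_1 (unital ring) with a complex scalar
multiplication sA making it a complex vector space and an algebra; F is a type 'f of
class ring (not necessarily unital) with complex scalar multiplication sF; lA and rA
are the left and right actions of A on F.\<close>

definition lin_fun :: "(complex \<Rightarrow> 'v \<Rightarrow> 'v) \<Rightarrow> ('v::ab_group_add \<Rightarrow> complex) \<Rightarrow> bool" where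
  "lin_fun s L \<longleftrightarrow> (\<forall>x y. L (x + y) = L x + L y) \<and> (\<forall>c x. L (s c x) = c * L x)"

definition ncps_B' ::
  "(complex \<Rightarrow> 'a::ring_1 \<Rightarrow> 'a) \<Rightarrow> (complex \<Rightarrow> 'f::ring \<Rightarrow> 'f) \<Rightarrow>
   ('a \<Rightarrow> 'f \<Rightarrow> 'f) \<Rightarrow> ('f \<Rightarrow> 'a \<Rightarrow> 'f) \<Rightarrow> ('a \<Rightarrow> complex) \<Rightarrow> ('f \<Rightarrow> complex) \<Rightarrow> bool" where
  "ncps_B' sA sF lA rA \<phi> \<Phi> \<longleftrightarrow>
     \<comment> \<open>A is a unital complex algebra\<close>
     vector_space sA \<and>
     (\<forall>c x y. sA c (x * y) = sA c x * y \<and> sA c (x * y) = x * sA c y) \<and>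
     \<comment> \<open>F is a complex algebra\<close>
     vector_space sF \<and>
     (\<forall>c f g. sF c (f * g) = sF c f * g \<and> sF c (f * g) = f * sF c g) \<and>
     \<comment> \<open>F is an A-bimodule\<close>
     (\<forall>a b f. lA (a + b) f = lA a f + lA b f) \<and>
     (\<forall>a f g. lA a (f + g) = lA a f + lA a g) \<and>
     (\<forall>f g a. rA (f + g) a = rA f a + rA g a) \<and>
     (\<forall>f a b. rA f (a + b) = rA f a + rA f b) \<and>
     (\<forall>c a f. lA (sA c a) f = sF c (lA a f) \<and> lA a (sF c f) = sF c (lA a f)) \<and>
     (\<forall>c a f. rA f (sA c a) = sF c (rA f a) \<and> rA (sF c f) a = sF c (rA f a)) \<and>
     (\<forall>f. lA 1 f = f \<and> rA f 1 = f) \<and>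
     (\<forall>a b f. lA (a * b) f = lA a (lA b f)) \<and>
     (\<forall>f a b. rA f (a * b) = rA (rA f a) b) \<and>
     (\<forall>a f b. lA a (rA f b) = rA (lA a f) b) \<and>
     \<comment> \<open>compatibility of the bimodule structure with the multiplication of F\<close>
     (\<forall>a f g. lA a (f * g) = lA a f * g) \<and>
     (\<forall>f g a. rA (f * g) a = f * rA g a) \<and>
     (\<forall>f a g. rA f a * g = f * lA a g) \<and>
     \<comment> \<open>the functionals\<close>
     lin_fun sA \<phi> \<and> \<phi> 1 = 1 \<and> lin_fun sF \<Phi>"

section \<open>The associated infinitesimal ncps: B = A \<oplus> F, elements are pairs (a, f)\<close>

definition mulB :: "('a::ring_1 \<Rightarrow> 'f \<Rightarrow> 'f) \<Rightarrow> ('f::ring \<Rightarrow> 'a \<Rightarrow> 'f) \<Rightarrow> 'a \<times> 'f \<Rightarrow> 'a \<times> 'f \<Rightarrow> 'a \<times> 'f" where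
  "mulB lA rA x y = (fst x * fst y, lA (fst x) (snd y) + rA (snd x) (fst y) + snd x * snd y)"

definition oneB :: "'a::ring_1 \<times> 'f::ring" where
  "oneB = (1, 0)"

primrec powB :: "('a::ring_1 \<Rightarrow> 'f \<Rightarrow> 'f) \<Rightarrow> ('f::ring \<Rightarrow> 'a \<Rightarrow> 'f) \<Rightarrow> 'a \<times> 'f \<Rightarrow> nat \<Rightarrow> 'a \<times> 'f" where
  "powB lA rA b 0 = oneB"
| "powB lA rA b (Suc n) = mulB lA rA b (powB lA rA b n)"

definition prodB :: "('a::ring_1 \<Rightarrow> 'f \<Rightarrow> 'f) \<Rightarrow> ('f::ring \<Rightarrow> 'a \<Rightarrow> 'f) \<Rightarrow> ('a \<times> 'f) list \<Rightarrow> 'a \<times> 'f" where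
  "prodB lA rA bs = foldr (mulB lA rA) bs oneB"

definition phiB :: "('a \<Rightarrow> complex) \<Rightarrow> 'a \<times> 'f \<Rightarrow> complex" where
  "phiB \<phi> b = \<phi> (fst b)"

definition phiB' :: "('f \<Rightarrow> complex) \<Rightarrow> 'a \<times> 'f \<Rightarrow> complex" where
  "phiB' \<Phi> b = \<Phi> (snd b)"

section \<open>Distributions (as moment sequences: the functional x^n \<mapsto> \<omega>(b^n))\<close>

definition distB :: "('a::ring_1 \<Rightarrow> 'f \<Rightarrow> 'f) \<Rightarrow> ('f::ring \<Rightarrow> 'a \<Rightarrow> 'f) \<Rightarrow>
     ('a \<times> 'f \<Rightarrow> complex) \<Rightarrow> 'a \<times> 'f \<Rightarrow> nat \<Rightarrow> complex" where
  "distB lA rA \<omega> b = (\<lambda>n. \<omega> (powB lA rA b n))"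

definition distA :: "('a::monoid_mult \<Rightarrow> complex) \<Rightarrow> 'a \<Rightarrow> nat \<Rightarrow> complex" where
  "distA \<phi> a = (\<lambda>n. \<phi> (a ^ n))"

definition unital_subalg :: "(complex \<Rightarrow> 'a::ring_1 \<Rightarrow> 'a) \<Rightarrow> 'a set \<Rightarrow> bool" where
  "unital_subalg s S \<longleftrightarrow> 1 \<in> S \<and> 0 \<in> S \<and> (\<forall>x\<in>S. \<forall>y\<in>S. x + y \<in> S \<and> x * y \<in> S)
      \<and> (\<forall>c. \<forall>x\<in>S. s c x \<in> S)"

definition subalg :: "(complex \<Rightarrow> 'f::ring \<Rightarrow> 'f) \<Rightarrow> 'f set \<Rightarrow> bool" where
  "subalg s S \<longleftrightarrow> 0 \<in> S \<and> (\<forall>x\<in>S. \<forall>y\<in>S. x + y \<in> S \<and> x * y \<in> S)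
      \<and> (\<forall>c. \<forall>x\<in>S. s c x \<in> S)"

definition unital_alg_gen :: "(complex \<Rightarrow> 'a::ring_1 \<Rightarrow> 'a) \<Rightarrow> 'a set \<Rightarrow> 'a set" where
  "unital_alg_gen s X = \<Inter> {S. unital_subalg s S \<and> X \<subseteq> S}"

definition alg_gen :: "(complex \<Rightarrow> 'f::ring \<Rightarrow> 'f) \<Rightarrow> 'f set \<Rightarrow> 'f set" where
  "alg_gen s X = \<Inter> {S. subalg s S \<and> X \<subseteq> S}"

definition alternating :: "'i list \<Rightarrow> bool" where
  "alternating is \<longleftrightarrow> (\<forall>l. Suc l < length is \<longrightarrow> is ! l \<noteq> is ! Suc l)"

definition free_family :: "('a::ring_1 \<Rightarrow> complex) \<Rightarrow> 'i set \<Rightarrow> ('i \<Rightarrow> 'a set) \<Rightarrow> bool" where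
  "free_family \<phi> I As \<longleftrightarrow>
     (\<forall>is cs. length cs = length is \<and> is \<noteq> [] \<and> set is \<subseteq> I \<and> alternating is \<and>
        (\<forall>l < length cs. cs ! l \<in> As (is ! l) \<and> \<phi> (cs ! l) = 0)
        \<longrightarrow> \<phi> (prod_list cs) = 0)"

text \<open>The word c_0 g_1 c_1 ... g_n c_n, computed in B (it lies in F); cs = [c_0,...,c_n],
  gs = [g_1,...,g_n].\<close>
fun interleave :: "'a::zero list \<Rightarrow> 'f list \<Rightarrow> ('a \<times> 'f::zero) list" where
  "interleave (c # cs) (g # gs) = (c, 0) # (0, g) # interleave cs gs"
| "interleave cs [] = map (\<lambda>c. (c, 0)) cs"
| "interleave [] gs = map (\<lambda>g. (0, g)) gs"

definition B'_free ::
  "(complex \<Rightarrow> 'a::ring_1 \<Rightarrow> 'a) \<Rightarrow> (complex \<Rightarrow> 'f::ring \<Rightarrow> 'f) \<Rightarrow>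
   ('a \<Rightarrow> 'f \<Rightarrow> 'f) \<Rightarrow> ('f \<Rightarrow> 'a \<Rightarrow> 'f) \<Rightarrow> ('a \<Rightarrow> complex) \<Rightarrow> ('f \<Rightarrow> complex) \<Rightarrow>
   'i set \<Rightarrow> ('i \<Rightarrow> 'a set) \<Rightarrow> 'j set \<Rightarrow> ('j \<Rightarrow> 'f set) \<Rightarrow> bool" where
  "B'_free sA sF lA rA \<phi> \<Phi> I As J Fs \<longleftrightarrow>
     free_family \<phi> I As \<and>
     (let A0 = unital_alg_gen sA (\<Union>i\<in>I. As i); F0 = alg_gen sF (\<Union>j\<in>J. Fs j) in
      \<forall>cs gs. gs \<noteq> [] \<and> length cs = Suc (length gs) \<and> set cs \<subseteq> A0 \<and> set gs \<subseteq> F0 \<longrightarrow>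
        \<Phi> (snd (prodB lA rA (interleave cs gs))) =
          \<phi> (hd cs * last cs) * (\<Prod>l \<in> {1..<length gs}. \<phi> (cs ! l)) *
          \<Phi> (snd (prodB lA rA (map (\<lambda>g. (0, g)) gs)))) \<and>
     (\<forall>js gs. length gs = length js \<and> length gs \<ge> 2 \<and> set js \<subseteq> J \<and> alternating js \<and>
        (\<forall>l < length gs. gs ! l \<in> Fs (js ! l))
        \<longrightarrow> \<Phi> (snd (prodB lA rA (map (\<lambda>g. (0, g)) gs))) = 0)"

text \<open>G_\<mu>(z) = \<Sum>_n \<mu>(x^n) z^{-n-1}, as a formal Laurent series in u = 1/z.\<close>
definition G_fps :: "(nat \<Rightarrow> complex) \<Rightarrow> complex fps" where
  "G_fps \<mu> = fps_X * Abs_fps \<mu>"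

definition G_ser :: "(nat \<Rightarrow> complex) \<Rightarrow> complex fls" where
  "G_ser \<mu> = fps_to_fls (G_fps \<mu>)"

definition F_ser :: "(nat \<Rightarrow> complex) \<Rightarrow> complex fls" where
  "F_ser \<mu> = inverse (G_ser \<mu>)"

text \<open>Derivative with respect to z = 1/u: d/dz = - u^2 d/du.\<close>
definition deriv_z :: "complex fls \<Rightarrow> complex fls" where
  "deriv_z S = - (fls_X ^ 2 * fls_deriv S)"

text \<open>G_\<nu>(S(z)) for a series S in z with S = z + ... : G_\<nu>(w) = (G_fps \<nu>)(1/w),
  so G_\<nu>(S) is the formal composition of G_fps \<nu> with 1/S.\<close>
definition G_comp :: "(nat \<Rightarrow> complex) \<Rightarrow> complex fls \<Rightarrow> complex fls" where
  "G_comp \<nu> S = fps_to_fls (fps_compose (G_fps \<nu>) (fls_regpart (inverse S)))"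

end

theory Submission
  imports Defs "HOL-Library.Product_Plus"
begin

definition t2 :: "(nat \<Rightarrow> complex) \<Rightarrow> nat \<Rightarrow> nat \<Rightarrow> complex" where
  "t2 \<mu> r M = (if M = 0 then 0 else (fps_X ^ M * Abs_fps \<mu> ^ (M - 1)) $ r)"

lemma t2_0: "t2 \<mu> r 0 = 0" by (simp add: t2_def)

lemma t2_big: "r < M \<Longrightarrow> t2 \<mu> r M = 0"
  by (simp add: t2_def fps_X_power_mult_nth)

lemma t2_1: "\<mu> 0 = 1 \<Longrightarrow> t2 \<mu> 1 M = (if M = 1 then 1 else 0)"
  by (cases "M = 0") (auto simp: t2_def fps_X_power_mult_nth)

lemma t2_rec: "t2 \<mu> (Suc (Suc r)) (Suc M) = (\<Sum>j\<le>r. \<mu> j * t2 \<mu> (Suc r - j) M)"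
proof (cases "M = 0")
  case True then show ?thesis by (simp add: t2_def fps_X_power_mult_nth)
next
  case False
  define P where "P = fps_X ^ M * Abs_fps \<mu> ^ (M - 1)"
  have P0: "P $ 0 = 0" using False by (simp add: P_def fps_X_power_mult_nth)
  have eq: "fps_X ^ Suc M * Abs_fps \<mu> ^ (Suc M - 1) = fps_X * (Abs_fps \<mu> * P)"
    using False by (cases M) (simp_all add: P_def algebra_simps)
  have "t2 \<mu> (Suc (Suc r)) (Suc M) = (fps_X ^ Suc M * Abs_fps \<mu> ^ (Suc M - 1)) $ Suc (Suc r)"
    unfolding t2_def by (rule if_not_P) simp
  also have "\<dots> = (fps_X * (Abs_fps \<mu> * P)) $ Suc (Suc r)" by (simp only: eq)
  also have "\<dots> = (Abs_fps \<mu> * P) $ Suc r" by (simp add: fps_X_mult_nth)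
  also have "\<dots> = (\<Sum>i=0..Suc r. \<mu> i * P $ (Suc r - i))" by (simp add: fps_mult_nth)
  also have "\<dots> = (\<Sum>i\<le>r. \<mu> i * P $ (Suc r - i))"
    using P0 by (simp add: atLeast0AtMost sum.atMost_Suc)
  also have "\<dots> = (\<Sum>j\<le>r. \<mu> j * t2 \<mu> (Suc r - j) M)"
    using False by (simp add: t2_def P_def)
  finally show ?thesis .
qed

lemma tau_coeff:
  fixes \<mu> \<eta> :: "nat \<Rightarrow> complex"
  assumes \<eta>0: "\<eta> 0 = 0"
  shows "Abs_fps (\<lambda>r. \<Sum>M\<le>r. t2 \<mu> r M * \<eta> M) * Abs_fps \<mu> = Abs_fps \<eta> oo (fps_X * Abs_fps \<mu>)"
proof (rule fps_ext)
  fix n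
  define P where "P M = Abs_fps (\<lambda>i. t2 \<mu> i M)" for M
  have PM: "P M * Abs_fps \<mu> = (fps_X * Abs_fps \<mu>) ^ M" if "M \<noteq> 0" for M
  proof -
    have "P M = fps_X ^ M * Abs_fps \<mu> ^ (M - 1)"
      using that by (simp add: P_def t2_def fps_eq_iff)
    thus ?thesis using that by (cases M) (simp_all add: algebra_simps power_mult_distrib)
  qed
  have "(Abs_fps (\<lambda>r. \<Sum>M\<le>r. t2 \<mu> r M * \<eta> M) * Abs_fps \<mu>) $ n =
      (\<Sum>i=0..n. (\<Sum>M\<le>i. t2 \<mu> i M * \<eta> M) * \<mu> (n - i))"
    by (simp add: fps_mult_nth)
  also have "\<dots> = (\<Sum>i=0..n. (\<Sum>M\<le>n. t2 \<mu> i M * \<eta> M) * \<mu> (n - i))"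
  proof (rule sum.cong[OF refl])
    fix i assume "i \<in> {0..n}"
    hence "{..n} = {..i} \<union> {i<..n}" by auto
    moreover have "(\<Sum>M\<in>{i<..n}. t2 \<mu> i M * \<eta> M) = 0" by (simp add: t2_big)
    ultimately have "(\<Sum>M\<le>n. t2 \<mu> i M * \<eta> M) = (\<Sum>M\<le>i. t2 \<mu> i M * \<eta> M)"
      using sum.union_disjoint[of "{..i}" "{i<..n}" "\<lambda>M. t2 \<mu> i M * \<eta> M"]
      by (metis (no_types, lifting) add.right_neutral disjoint_iff finite_atMost
          finite_greaterThanAtMost greaterThanAtMost_iff atMost_iff leD)
    thus "(\<Sum>M\<le>i. t2 \<mu> i M * \<eta> M) * \<mu> (n - i) = (\<Sum>M\<le>n. t2 \<mu> i M * \<eta> M) * \<mu> (n - i)"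
      by simp
  qed
  also have "\<dots> = (\<Sum>M\<le>n. \<eta> M * (\<Sum>i=0..n. t2 \<mu> i M * \<mu> (n - i)))"
  proof -
    have "(\<Sum>i=0..n. (\<Sum>M\<le>n. t2 \<mu> i M * \<eta> M) * \<mu> (n - i)) =
        (\<Sum>i=0..n. \<Sum>M\<le>n. \<eta> M * (t2 \<mu> i M * \<mu> (n - i)))"
      by (rule sum.cong[OF refl], subst sum_distrib_right, rule sum.cong[OF refl], simp add: mult_ac)
    also have "\<dots> = (\<Sum>M\<le>n. \<Sum>i=0..n. \<eta> M * (t2 \<mu> i M * \<mu> (n - i)))"
      by (rule sum.swap)
    finally show ?thesis by (simp add: sum_distrib_left)
  qed
  also have "\<dots> = (\<Sum>M\<le>n. \<eta> M * ((P M * Abs_fps \<mu>) $ n))"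
    by (simp add: P_def fps_mult_nth)
  also have "\<dots> = (\<Sum>M\<le>n. \<eta> M * ((fps_X * Abs_fps \<mu>) ^ M $ n))"
    by (rule sum.cong[OF refl]) (metis PM \<eta>0 mult_zero_left)
  also have "\<dots> = (Abs_fps \<eta> oo (fps_X * Abs_fps \<mu>)) $ n"
    by (simp add: fps_compose_nth atLeast0AtMost)
  finally show "(Abs_fps (\<lambda>r. \<Sum>M\<le>r. t2 \<mu> r M * \<eta> M) * Abs_fps \<mu>) $ n = (Abs_fps \<eta> oo (fps_X * Abs_fps \<mu>)) $ n" .
qed

locale BP =
  fixes sA :: "complex \<Rightarrow> 'a::ring_1 \<Rightarrow> 'a" and sF :: "complex \<Rightarrow> 'f::ring \<Rightarrow> 'f"
    and lA :: "'a \<Rightarrow> 'f \<Rightarrow> 'f" and rA :: "'f \<Rightarrow> 'a \<Rightarrow> 'f"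
    and \<phi> :: "'a \<Rightarrow> complex" and \<Phi> :: "'f \<Rightarrow> complex"
  assumes ncps: "ncps_B' sA sF lA rA \<phi> \<Phi>"
begin

abbreviation mul where "mul \<equiv> mulB lA rA"
abbreviation sp where "sp gs \<equiv> snd (prodB lA rA (map (\<lambda>g. (0, g)) gs))"

lemma lA_addL: "lA (a + b) f = lA a f + lA b f" using ncps by (simp add: ncps_B'_def)
lemma lA_addR: "lA a (f + g) = lA a f + lA a g" using ncps by (simp add: ncps_B'_def)
lemma rA_addL: "rA (f + g) a = rA f a + rA g a" using ncps by (simp add: ncps_B'_def)
lemma rA_addR: "rA f (a + b) = rA f a + rA f b" using ncps by (simp add: ncps_B'_def)
lemma lA_one: "lA 1 f = f" using ncps by (simp add: ncps_B'_def)
lemma rA_one: "rA f 1 = f" using ncps by (simp add: ncps_B'_def)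
lemma lA_mult: "lA (a * b) f = lA a (lA b f)" using ncps by (simp add: ncps_B'_def)
lemma rA_mult: "rA f (a * b) = rA (rA f a) b" using ncps by (simp add: ncps_B'_def)
lemma lA_rA: "lA a (rA f b) = rA (lA a f) b" using ncps by (simp add: ncps_B'_def)
lemma lA_multF: "lA a (f * g) = lA a f * g" using ncps by (simp add: ncps_B'_def)
lemma rA_multF: "rA (f * g) a = f * rA g a" using ncps by (simp add: ncps_B'_def)
lemma rA_lA_F: "rA f a * g = f * lA a g" using ncps by (simp add: ncps_B'_def)
lemma Phi_add: "\<Phi> (x + y) = \<Phi> x + \<Phi> y" using ncps by (simp add: ncps_B'_def lin_fun_def)
lemma phi_1: "\<phi> 1 = 1" using ncps by (simp add: ncps_B'_def)

lemma lA_0R[simp]: "lA a 0 = 0" using lA_addR[of a 0 0] by simp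
lemma lA_0L[simp]: "lA 0 f = 0" using lA_addL[of 0 0 f] by simp
lemma rA_0L[simp]: "rA 0 a = 0" using rA_addL[of 0 0 a] by simp
lemma rA_0R[simp]: "rA f 0 = 0" using rA_addR[of f 0 0] by simp
lemma Phi_0[simp]: "\<Phi> 0 = 0" using Phi_add[of 0 0] by simp
lemma Phi_sum: "\<Phi> (\<Sum>i\<in>A. x i) = (\<Sum>i\<in>A. \<Phi> (x i))"
  by (induction A rule: infinite_finite_induct) (auto simp: Phi_add)

lemma mul_assoc: "mul (mul x y) z = mul x (mul y z)"
  by (simp add: mulB_def lA_addR rA_addL lA_mult rA_mult lA_rA lA_multF rA_multF rA_lA_F
      algebra_simps)
lemma mul_addL: "mul (x + y) z = mul x z + mul y z"
  by (simp add: mulB_def lA_addL rA_addL algebra_simps)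
lemma mul_addR: "mul z (x + y) = mul z x + mul z y"
  by (simp add: mulB_def lA_addR rA_addR algebra_simps)
lemma mul_0L[simp]: "mul 0 z = 0" by (simp add: mulB_def zero_prod_def)
lemma mul_0R[simp]: "mul z 0 = 0" by (simp add: mulB_def zero_prod_def)
lemma mul_oneL[simp]: "mul oneB x = x" by (simp add: mulB_def oneB_def lA_one)
lemma mul_oneR[simp]: "mul x oneB = x" by (simp add: mulB_def oneB_def rA_one)
lemma mul_sumL: "mul (\<Sum>i\<in>A. x i) z = (\<Sum>i\<in>A. mul (x i) z)"
  by (induction A rule: infinite_finite_induct) (auto simp: mul_addL)
lemma mul_sumR: "mul z (\<Sum>i\<in>A. x i) = (\<Sum>i\<in>A. mul z (x i))"
  by (induction A rule: infinite_finite_induct) (auto simp: mul_addR)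

lemma prodB_Nil[simp]: "prodB lA rA [] = oneB" by (simp add: prodB_def)
lemma prodB_Cons[simp]: "prodB lA rA (x # xs) = mul x (prodB lA rA xs)" by (simp add: prodB_def)

lemma powB_fst: "fst (powB lA rA b n) = fst b ^ n"
  by (induction n) (simp_all add: oneB_def mulB_def)

lemma powB_Suc_right: "powB lA rA b (Suc n) = mul (powB lA rA b n) b"
proof (induction n)
  case (Suc n)
  have "powB lA rA b (Suc (Suc n)) = mul b (mul (powB lA rA b n) b)" using Suc by simp
  also have "\<dots> = mul (powB lA rA b (Suc n)) b" by (simp add: mul_assoc)
  finally show ?case .
qed simp

lemma powB_prod: "powB lA rA b n = prodB lA rA (replicate n b)"
  by (induction n) simp_all

lemma sp_fst: "fst (prodB lA rA (map (\<lambda>g. (0, g)) gs)) = (if gs = [] then 1 else 0)"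
  by (induction gs) (simp_all add: oneB_def mulB_def)

lemma sp_Nil: "sp [] = 0" by (simp add: oneB_def)
lemma sp_Cons: "sp (g # gs) = (if gs = [] then g else g * sp gs)"
  by (simp add: mulB_def sp_fst rA_one oneB_def)

lemma sp_addpos: "sp (xs @ (g + h) # ys) = sp (xs @ g # ys) + sp (xs @ h # ys)"
proof (induction xs)
  case Nil then show ?case by (simp only: sp_Cons append_Nil) (simp add: algebra_simps)
next
  case (Cons x xs) then show ?case by (simp only: sp_Cons append_Cons) (simp add: algebra_simps)
qed

lemma sp_merge: "sp (xs @ g # h # ys) = sp (xs @ (g * h) # ys)"
proof (induction xs)
  case Nil then show ?case by (simp only: sp_Cons append_Nil) (simp add: algebra_simps)
next
  case (Cons x xs) then show ?case by (simp only: sp_Cons append_Cons) simp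
qed

lemma oneB_eq: "(1, 0) = oneB" by (simp add: oneB_def)
lemma mulA: "mul (x, 0) (y, 0) = (x * y, 0)" by (simp add: mulB_def)

definition T :: "'a \<Rightarrow> 'f \<Rightarrow> nat \<Rightarrow> 'a \<times> 'f" where
  "T a f r = (case r of 0 \<Rightarrow> 0 | Suc 0 \<Rightarrow> (0, f)
     | Suc (Suc k) \<Rightarrow> mul (mul (0, f) (powB lA rA (a, f) k)) (0, f))"

lemma T1: "T a f (Suc 0) = (0, f)" by (simp add: T_def)
lemma T2: "T a f (Suc (Suc k)) = mul (mul (0, f) (powB lA rA (a, f) k)) (0, f)"
  by (simp add: T_def)

lemma U_decomp: "mul (0, f) (powB lA rA (a, f) k) = (\<Sum>j\<le>k. mul (T a f (Suc k - j)) (a ^ j, 0))"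
proof (induction k)
  case 0 then show ?case by (simp add: T1 oneB_eq)
next
  case (Suc k)
  let ?U = "mul (0, f) (powB lA rA (a, f) k)"
  have "mul (0, f) (powB lA rA (a, f) (Suc k)) = mul ?U (a, f)"
    by (simp only: powB_Suc_right mul_assoc)
  also have "\<dots> = mul ?U ((a, 0) + (0, f))" by simp
  also have "\<dots> = mul ?U (a, 0) + mul ?U (0, f)" by (rule mul_addR)
  also have "mul ?U (0, f) = T a f (Suc (Suc k))" by (simp only: T2)
  also have "mul ?U (a, 0) = mul (\<Sum>j\<le>k. mul (T a f (Suc k - j)) (a ^ j, 0)) (a, 0)"
    by (simp only: Suc)
  also have "\<dots> = (\<Sum>j\<le>k. mul (T a f (Suc k - j)) (a ^ Suc j, 0))"
    by (simp only: mul_sumL mul_assoc mulA power_Suc2)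
  finally have "mul (0, f) (powB lA rA (a, f) (Suc k)) =
      (\<Sum>j\<le>k. mul (T a f (Suc k - j)) (a ^ Suc j, 0)) + T a f (Suc (Suc k))" .
  moreover have "(\<Sum>j\<le>Suc k. mul (T a f (Suc (Suc k) - j)) (a ^ j, 0)) =
      mul (T a f (Suc (Suc k))) (1, 0) + (\<Sum>j\<le>k. mul (T a f (Suc k - j)) (a ^ Suc j, 0))"
    by (simp only: sum.atMost_Suc_shift) simp
  ultimately show ?case by (simp add: oneB_eq add.commute)
qed

lemma b_decomp: "powB lA rA (a, f) n =
   (a ^ n, 0) + (\<Sum>p<n. mul (a ^ p, 0) (mul (0, f) (powB lA rA (a, f) (n - 1 - p))))"
proof (induction n)
  case 0 then show ?case by (simp add: oneB_def)
next
  case (Suc n)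
  let ?U = "\<lambda>m. mul (0, f) (powB lA rA (a, f) m)"
  have "powB lA rA (a, f) (Suc n) = mul ((a, 0) + (0, f)) (powB lA rA (a, f) n)" by simp
  also have "\<dots> = mul (a, 0) (powB lA rA (a, f) n) + ?U n" by (simp only: mul_addL)
  also have "mul (a, 0) (powB lA rA (a, f) n) =
      (a ^ Suc n, 0) + (\<Sum>p<n. mul (a ^ Suc p, 0) (?U (n - 1 - p)))"
    by (subst Suc) (simp only: mul_addR mul_sumR mul_assoc[symmetric] mulA power_Suc)
  finally have c1: "powB lA rA (a, f) (Suc n) =
     (a ^ Suc n, 0) + (\<Sum>p<n. mul (a ^ Suc p, 0) (?U (n - 1 - p))) + ?U n" .
  have c2: "(\<Sum>p<Suc n. mul (a ^ p, 0) (?U (Suc n - 1 - p))) =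
     mul (1, 0) (?U n) + (\<Sum>p<n. mul (a ^ Suc p, 0) (?U (n - 1 - p)))"
    by (simp only: sum.lessThan_Suc_shift) simp
  have e: "mul (1, 0) (?U n) = ?U n" by (simp only: oneB_eq mul_oneL)
  have e2: "Suc n - 1 = n" by simp
  let ?S = "\<Sum>p<n. mul (a ^ Suc p, 0) (?U (n - 1 - p))"
  have "powB lA rA (a, f) (Suc n) = (a ^ Suc n, 0) + (?S + ?U n)" using c1 by (simp only: add.assoc)
  also have "?S + ?U n = mul (1, 0) (?U n) + ?S" using e by (simp only: add.commute)
  also have "\<dots> = (\<Sum>p<Suc n. mul (a ^ p, 0) (?U (Suc n - 1 - p)))" using c2 by (rule sym)
  finally show ?case .
qed

lemma prod_shift1: "(\<Prod>l\<in>{1..<Suc n}. h l) = (\<Prod>l<n. h (Suc l) :: complex)"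
  by (induction n) (simp_all add: prod.atLeastLessThan_Suc lessThan_Suc mult.commute)

lemma S_lemma:
  fixes a :: 'a and f :: 'f and A0 F0
  assumes frii: "\<And>cs gs. gs \<noteq> [] \<Longrightarrow> length cs = Suc (length gs) \<Longrightarrow> set cs \<subseteq> A0 \<Longrightarrow> set gs \<subseteq> F0 \<Longrightarrow>
      \<Phi> (snd (prodB lA rA (interleave cs gs))) =
        \<phi> (hd cs * last cs) * (\<Prod>l\<in>{1..<length gs}. \<phi> (cs ! l)) * \<Phi> (sp gs)"
    and aA: "\<And>j. a ^ j \<in> A0" and fF: "f \<in> F0"
  shows "1 \<le> r \<Longrightarrow> r \<le> N \<Longrightarrow> c0 \<in> A0 \<Longrightarrow> set cs \<subseteq> A0 \<Longrightarrow> set gs \<subseteq> F0 \<Longrightarrow>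
    length cs = Suc (length gs) \<Longrightarrow>
    \<Phi> (snd (mul (c0, 0) (mul (T a f r) (prodB lA rA (interleave cs gs))))) =
    \<phi> (c0 * last cs) * (\<Prod>l<length gs. \<phi> (cs ! l)) *
      (\<Sum>M\<le>N. t2 (\<lambda>j. \<phi> (a ^ j)) r M * \<Phi> (sp (replicate M f @ gs)))"
proof (induction r arbitrary: N cs gs rule: less_induct)
  case (less r)
  define \<mu> where "\<mu> = (\<lambda>j. \<phi> (a ^ j))"
  have \<mu>0: "\<mu> 0 = 1" by (simp add: \<mu>_def phi_1)
  have csne: "cs \<noteq> []" using less.prems by auto
  consider "r = Suc 0" | k where "r = Suc (Suc k)" using less.prems(1)
  proof -
    obtain r' where "r = Suc r'" using less.prems(1) by (cases r) auto
    thus thesis using that by (cases r') auto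
  qed
  then show ?case
  proof cases
    case 1
    have "mul (c0, 0) (mul (T a f r) (prodB lA rA (interleave cs gs))) =
        prodB lA rA (interleave (c0 # cs) (f # gs))" by (simp add: 1 T1)
    hence "\<Phi> (snd (mul (c0, 0) (mul (T a f r) (prodB lA rA (interleave cs gs))))) =
        \<phi> (c0 * last cs) * (\<Prod>l\<in>{1..<Suc (length gs)}. \<phi> ((c0 # cs) ! l)) * \<Phi> (sp (f # gs))"
      using frii[of "f # gs" "c0 # cs"] less.prems fF csne by simp
    also have "(\<Prod>l\<in>{1..<Suc (length gs)}. \<phi> ((c0 # cs) ! l)) = (\<Prod>l<length gs. \<phi> (cs ! l))"
      by (simp only: prod_shift1 nth_Cons_Suc)
    also have "\<Phi> (sp (f # gs)) = (\<Sum>M\<le>N. t2 \<mu> r M * \<Phi> (sp (replicate M f @ gs)))"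
    proof -
      have t21: "t2 \<mu> (Suc 0) M = (if M = Suc 0 then 1 else 0)" for M
        using t2_1[of \<mu> M] \<mu>0 by simp
      have "(\<Sum>M\<le>N. t2 \<mu> r M * \<Phi> (sp (replicate M f @ gs))) =
          (\<Sum>M\<le>N. if M = Suc 0 then \<Phi> (sp (replicate M f @ gs)) else 0)"
        by (rule sum.cong) (auto simp: t21 1)
      also have "\<dots> = \<Phi> (sp (replicate (Suc 0) f @ gs))"
        using less.prems(2) 1 by (subst sum.delta) auto
      finally show ?thesis by simp
    qed
    finally show ?thesis by (simp add: \<mu>_def)
  next
    case 2
    define N' where "N' = N - 1"
    have N: "N = Suc N'" using less.prems(2) 2 by (simp add: N'_def)
    let ?W = "prodB lA rA (interleave cs gs)"
    let ?C = "\<phi> (c0 * last cs) * (\<Prod>l<length gs. \<phi> (cs ! l))"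
    let ?X = "\<lambda>M. \<Phi> (sp (replicate M f @ gs))"
    have "mul (c0, 0) (mul (T a f r) ?W) =
        (\<Sum>j\<le>k. mul (c0, 0) (mul (T a f (Suc k - j)) (prodB lA rA (interleave (a ^ j # cs) (f # gs)))))"
      by (simp add: 2 T2 U_decomp mul_sumL mul_sumR mul_assoc)
    hence "\<Phi> (snd (mul (c0, 0) (mul (T a f r) ?W))) =
        (\<Sum>j\<le>k. \<Phi> (snd (mul (c0, 0) (mul (T a f (Suc k - j)) (prodB lA rA (interleave (a ^ j # cs) (f # gs)))))))"
      by (simp add: snd_sum Phi_sum)
    also have "\<dots> = (\<Sum>j\<le>k. ?C * (\<mu> j * (\<Sum>M\<le>N'. t2 \<mu> (Suc k - j) M * ?X (Suc M))))"
    proof (rule sum.cong[OF refl])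
      fix j assume j: "j \<in> {..k}"
      have "\<Phi> (snd (mul (c0, 0) (mul (T a f (Suc k - j)) (prodB lA rA (interleave (a ^ j # cs) (f # gs)))))) =
        \<phi> (c0 * last (a ^ j # cs)) * (\<Prod>l<length (f # gs). \<phi> ((a ^ j # cs) ! l)) *
        (\<Sum>M\<le>N'. t2 \<mu> (Suc k - j) M * \<Phi> (sp (replicate M f @ f # gs)))"
        unfolding \<mu>_def
        using j less.prems 2 aA fF by (intro less.IH) (auto simp: N'_def)
      also have "(\<Prod>l<length (f # gs). \<phi> ((a ^ j # cs) ! l)) = \<mu> j * (\<Prod>l<length gs. \<phi> (cs ! l))"
        by (simp only: length_Cons prod.lessThan_Suc_shift nth_Cons_0 nth_Cons_Suc \<mu>_def)
      also have "last (a ^ j # cs) = last cs" using csne by simp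
      also have "(\<lambda>M. \<Phi> (sp (replicate M f @ f # gs))) = (\<lambda>M. ?X (Suc M))"
        by (simp add: replicate_app_Cons_same)
      finally show "\<Phi> (snd (mul (c0, 0) (mul (T a f (Suc k - j)) (prodB lA rA (interleave (a ^ j # cs) (f # gs)))))) =
          ?C * (\<mu> j * (\<Sum>M\<le>N'. t2 \<mu> (Suc k - j) M * ?X (Suc M)))"
        by (simp add: mult_ac)
    qed
    also have "\<dots> = ?C * (\<Sum>j\<le>k. \<Sum>M\<le>N'. \<mu> j * (t2 \<mu> (Suc k - j) M * ?X (Suc M)))"
      by (simp only: sum_distrib_left)
    also have "\<dots> = ?C * (\<Sum>M\<le>N'. \<Sum>j\<le>k. \<mu> j * (t2 \<mu> (Suc k - j) M * ?X (Suc M)))"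
      by (subst sum.swap) (rule refl)
    also have "\<dots> = ?C * (\<Sum>M\<le>N'. t2 \<mu> (Suc (Suc k)) (Suc M) * ?X (Suc M))"
      by (simp only: t2_rec sum_distrib_right mult.assoc)
    also have "\<dots> = ?C * (\<Sum>M\<le>N. t2 \<mu> r M * ?X M)"
      by (simp only: N 2 sum.atMost_Suc_shift t2_0 mult_zero_left add_0_left)
    finally show ?thesis by (simp add: \<mu>_def)
  qed
qed

lemma alt_Cons: "alternating (i # js) \<longleftrightarrow> (js = [] \<or> i \<noteq> hd js) \<and> alternating js"
proof (cases js)
  case Nil then show ?thesis by (simp add: alternating_def)
next
  case (Cons j js')
  have "alternating (i # j # js') \<longleftrightarrow> i \<noteq> j \<and> alternating (j # js')"
  proof
    assume A: "alternating (i # j # js')"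
    have "i \<noteq> j" using A[unfolded alternating_def, rule_format, of 0] by simp
    moreover have "alternating (j # js')" unfolding alternating_def
    proof (intro allI impI)
      fix l assume "Suc l < length (j # js')"
      thus "(j # js') ! l \<noteq> (j # js') ! Suc l"
        using A[unfolded alternating_def, rule_format, of "Suc l"] by simp
    qed
    ultimately show "i \<noteq> j \<and> alternating (j # js')" ..
  next
    assume B: "i \<noteq> j \<and> alternating (j # js')"
    show "alternating (i # j # js')" unfolding alternating_def
    proof (intro allI impI)
      fix l assume l: "Suc l < length (i # j # js')"
      show "(i # j # js') ! l \<noteq> (i # j # js') ! Suc l"
      proof (cases l)
        case 0 then show ?thesis using B by simp
      next
        case (Suc l') then show ?thesis
          using B[THEN conjunct2, unfolded alternating_def, rule_format, of l'] l by simp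
      qed
    qed
  qed
  then show ?thesis using Cons by simp
qed

lemma rep_split: "replicate (Suc M) x @ ts = replicate M x @ x # ts"
  by (simp add: replicate_app_Cons_same)

lemma triv_A:
  fixes f1 f2 :: 'f and Fs :: "nat \<Rightarrow> 'f set"
  assumes triv: "\<And>js gs. length gs = length js \<Longrightarrow> 2 \<le> length gs \<Longrightarrow> set js \<subseteq> {1, 2} \<Longrightarrow>
      alternating js \<Longrightarrow> (\<forall>l<length gs. gs ! l \<in> Fs (js ! l)) \<Longrightarrow> \<Phi> (sp gs) = 0"
    and cl: "\<And>j x y. x \<in> Fs j \<Longrightarrow> y \<in> Fs j \<Longrightarrow> x * y \<in> Fs j"
    and f1: "f1 \<in> Fs 1" and f2: "f2 \<in> Fs 2"
  shows "length ts = length js \<Longrightarrow> 2 \<le> length ts \<Longrightarrow> set js \<subseteq> {1, 2} \<Longrightarrow> alternating js \<Longrightarrow>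
    (\<forall>l<length ts. ts ! l \<in> Fs (js ! l)) \<Longrightarrow> \<Phi> (sp (replicate M (f1 + f2) @ ts)) = 0"
proof (induction M arbitrary: ts js)
  case 0 then show ?case using triv by simp
next
  case (Suc M)
  have step: "\<Phi> (sp (replicate M (f1 + f2) @ g # ts)) = 0" if g: "g \<in> Fs i" "i \<in> {1, 2}" for g i
  proof -
    obtain t ts' where ts: "ts = t # ts'" using Suc.prems(2) by (cases ts) auto
    obtain j js' where js: "js = j # js'" using Suc.prems(1,2) by (cases js) auto
    show ?thesis
    proof (cases "j = i")
      case True
      have "sp (replicate M (f1 + f2) @ g # ts) = sp (replicate M (f1 + f2) @ (g * t) # ts')"
        by (simp only: ts sp_merge)
      moreover have "\<Phi> (sp (replicate M (f1 + f2) @ (g * t) # ts')) = 0"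
      proof (rule Suc.IH[of _ js])
        show "\<forall>l<length (g * t # ts'). (g * t # ts') ! l \<in> Fs (js ! l)"
        proof (intro allI impI)
          fix l assume l: "l < length (g * t # ts')"
          show "(g * t # ts') ! l \<in> Fs (js ! l)"
          proof (cases l)
            case 0 then show ?thesis using Suc.prems(5) ts js True g cl by force
          next
            case (Suc l') then show ?thesis using Suc.prems(5) ts js l
              by (metis length_Cons nth_Cons_Suc)
          qed
        qed
      qed (use Suc.prems ts in auto)
      ultimately show ?thesis by simp
    next
      case False
      show ?thesis
      proof (rule Suc.IH[of _ "i # js"])
        show "alternating (i # js)" using False Suc.prems(4) js by (simp add: alt_Cons)
        show "\<forall>l<length (g # ts). (g # ts) ! l \<in> Fs ((i # js) ! l)"
        proof (intro allI impI)
          fix l assume l: "l < length (g # ts)"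
          show "(g # ts) ! l \<in> Fs ((i # js) ! l)"
          proof (cases l)
            case 0 then show ?thesis using g by simp
          next
            case (Suc l') then show ?thesis using Suc.prems(5) l by simp
          qed
        qed
      qed (use Suc.prems g in auto)
    qed
  qed
  have "sp (replicate (Suc M) (f1 + f2) @ ts) =
      sp (replicate M (f1 + f2) @ f1 # ts) + sp (replicate M (f1 + f2) @ f2 # ts)"
    by (simp only: rep_split sp_addpos)
  then show ?case using step[OF f1] step[OF f2] by (simp add: Phi_add)
qed

lemma triv_B:
  fixes f1 f2 :: 'f and Fs :: "nat \<Rightarrow> 'f set"
  assumes triv: "\<And>js gs. length gs = length js \<Longrightarrow> 2 \<le> length gs \<Longrightarrow> set js \<subseteq> {1, 2} \<Longrightarrow>
      alternating js \<Longrightarrow> (\<forall>l<length gs. gs ! l \<in> Fs (js ! l)) \<Longrightarrow> \<Phi> (sp gs) = 0"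
    and cl: "\<And>j x y. x \<in> Fs j \<Longrightarrow> y \<in> Fs j \<Longrightarrow> x * y \<in> Fs j"
    and f1: "f1 \<in> Fs 1" and f2: "f2 \<in> Fs 2"
    and j: "j \<in> {1, 2}"
  shows "t \<in> Fs j \<Longrightarrow> \<Phi> (sp (replicate M (f1 + f2) @ [t])) =
      \<Phi> (sp (replicate M (if j = 1 then f1 else f2) @ [t]))"
proof (induction M arbitrary: t)
  case 0 then show ?case by simp
next
  case (Suc M)
  define fj where "fj = (if j = 1 then f1 else f2)"
  define fo where "fo = (if j = 1 then f2 else f1)"
  define jo where "jo = (if j = 1 then (2::nat) else 1)"
  have fj: "fj \<in> Fs j" using j f1 f2 by (auto simp: fj_def)
  have fo: "fo \<in> Fs jo" using j f1 f2 by (auto simp: fo_def jo_def)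
  have "\<Phi> (sp (replicate (Suc M) (f1 + f2) @ [t])) =
      \<Phi> (sp (replicate M (f1 + f2) @ [fj, t])) + \<Phi> (sp (replicate M (f1 + f2) @ [fo, t]))"
  proof -
    have "sp (replicate (Suc M) (f1 + f2) @ [t]) =
      sp (replicate M (f1 + f2) @ [f1, t]) + sp (replicate M (f1 + f2) @ [f2, t])"
      by (simp only: rep_split sp_addpos)
    thus ?thesis using j by (auto simp: fj_def fo_def Phi_add)
  qed
  also have "\<Phi> (sp (replicate M (f1 + f2) @ [fo, t])) = 0"
    by (rule triv_A[OF triv cl f1 f2, where js="[jo, j]"]) (use j Suc.prems fo in \<open>auto simp: jo_def alternating_def less_Suc_eq nth_Cons'\<close>)
  also have "\<Phi> (sp (replicate M (f1 + f2) @ [fj, t])) = \<Phi> (sp (replicate M (f1 + f2) @ [fj * t]))"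
    by (simp only: sp_merge)
  also have "\<dots> = \<Phi> (sp (replicate M fj @ [fj * t]))"
    using Suc.IH[of "fj * t"] cl[OF fj Suc.prems] by (simp add: fj_def)
  also have "\<dots> = \<Phi> (sp (replicate (Suc M) fj @ [t]))"
    by (simp only: rep_split sp_merge)
  finally show ?case by (simp add: fj_def)
qed

lemma eta_lemma:
  fixes f1 f2 :: 'f and Fs :: "nat \<Rightarrow> 'f set"
  assumes triv: "\<And>js gs. length gs = length js \<Longrightarrow> 2 \<le> length gs \<Longrightarrow> set js \<subseteq> {1, 2} \<Longrightarrow>
      alternating js \<Longrightarrow> (\<forall>l<length gs. gs ! l \<in> Fs (js ! l)) \<Longrightarrow> \<Phi> (sp gs) = 0"
    and cl: "\<And>j x y. x \<in> Fs j \<Longrightarrow> y \<in> Fs j \<Longrightarrow> x * y \<in> Fs j"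
    and f1: "f1 \<in> Fs 1" and f2: "f2 \<in> Fs 2"
  shows "\<Phi> (sp (replicate M (f1 + f2))) = \<Phi> (sp (replicate M f1)) + \<Phi> (sp (replicate M f2))"
proof (cases M)
  case 0 then show ?thesis by (simp add: oneB_def)
next
  case (Suc K)
  have "sp (replicate M (f1 + f2)) = sp (replicate K (f1 + f2) @ [f1]) + sp (replicate K (f1 + f2) @ [f2])"
    using sp_addpos[of "replicate K (f1 + f2)" f1 f2 "[]"] by (simp add: Suc replicate_append_same)
  hence "\<Phi> (sp (replicate M (f1 + f2))) =
      \<Phi> (sp (replicate K f1 @ [f1])) + \<Phi> (sp (replicate K f2 @ [f2]))"
    using triv_B[OF triv cl f1 f2, where j=1 and t=f1 and M=K] triv_B[OF triv cl f1 f2, where j=2 and t=f2 and M=K] f1 f2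
    by (simp add: Phi_add)
  then show ?thesis by (simp add: Suc replicate_append_same)
qed

lemma nu_formula:
  fixes a :: 'a and f :: 'f and A0 F0
  assumes frii: "\<And>cs gs. gs \<noteq> [] \<Longrightarrow> length cs = Suc (length gs) \<Longrightarrow> set cs \<subseteq> A0 \<Longrightarrow> set gs \<subseteq> F0 \<Longrightarrow>
      \<Phi> (snd (prodB lA rA (interleave cs gs))) =
        \<phi> (hd cs * last cs) * (\<Prod>l\<in>{1..<length gs}. \<phi> (cs ! l)) * \<Phi> (sp gs)"
    and aA: "\<And>j. a ^ j \<in> A0" and fF: "f \<in> F0"
  shows "\<Phi> (snd (powB lA rA (a, f) n)) =
    (\<Sum>p<n. \<Sum>j\<le>n - 1 - p. \<phi> (a ^ (p + j)) *
       (\<lambda>r. \<Sum>M\<le>r. t2 (\<lambda>j. \<phi> (a ^ j)) r M * \<Phi> (sp (replicate M f))) (Suc (n - 1 - p) - j))"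
proof -
  let ?tau = "\<lambda>r. \<Sum>M\<le>r. t2 (\<lambda>j. \<phi> (a ^ j)) r M * \<Phi> (sp (replicate M f))"
  have "snd (powB lA rA (a, f) n) =
      (\<Sum>p<n. snd (mul (a ^ p, 0) (mul (0, f) (powB lA rA (a, f) (n - 1 - p)))))"
    by (subst b_decomp) (simp add: snd_sum)
  hence "\<Phi> (snd (powB lA rA (a, f) n)) =
      (\<Sum>p<n. \<Phi> (snd (mul (a ^ p, 0) (mul (0, f) (powB lA rA (a, f) (n - 1 - p))))))"
    by (simp add: Phi_sum)
  also have "\<dots> = (\<Sum>p<n. \<Sum>j\<le>n - 1 - p. \<phi> (a ^ (p + j)) * ?tau (Suc (n - 1 - p) - j))"
  proof (rule sum.cong[OF refl])
    fix p assume p: "p \<in> {..<n}"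
    have "\<Phi> (snd (mul (a ^ p, 0) (mul (0, f) (powB lA rA (a, f) (n - 1 - p))))) =
        (\<Sum>j\<le>n - 1 - p. \<Phi> (snd (mul (a ^ p, 0) (mul (T a f (Suc (n - 1 - p) - j)) (a ^ j, 0)))))"
      by (simp only: U_decomp mul_sumR snd_sum Phi_sum)
    also have "\<dots> = (\<Sum>j\<le>n - 1 - p. \<phi> (a ^ (p + j)) * ?tau (Suc (n - 1 - p) - j))"
    proof (rule sum.cong[OF refl])
      fix j assume j: "j \<in> {..n - 1 - p}"
      have e: "(a ^ j, 0) = prodB lA rA (interleave [a ^ j] [])" by simp
      have "\<Phi> (snd (mul (a ^ p, 0) (mul (T a f (Suc (n - 1 - p) - j)) (prodB lA rA (interleave [a ^ j] []))))) =
          \<phi> (a ^ p * last [a ^ j]) * (\<Prod>l<length ([]::'f list). \<phi> ([a ^ j] ! l)) *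
          (\<Sum>M\<le>Suc (n - 1 - p) - j. t2 (\<lambda>j. \<phi> (a ^ j)) (Suc (n - 1 - p) - j) M * \<Phi> (sp (replicate M f @ [])))"
        by (rule S_lemma[OF frii aA fF]) (use j aA in auto)
      thus "\<Phi> (snd (mul (a ^ p, 0) (mul (T a f (Suc (n - 1 - p) - j)) (a ^ j, 0)))) =
          \<phi> (a ^ (p + j)) * ?tau (Suc (n - 1 - p) - j)"
        by (simp only: e[symmetric]) (simp add: power_add)
    qed
    finally show "\<Phi> (snd (mul (a ^ p, 0) (mul (0, f) (powB lA rA (a, f) (n - 1 - p))))) =
        (\<Sum>j\<le>n - 1 - p. \<phi> (a ^ (p + j)) * ?tau (Suc (n - 1 - p) - j))" .
  qed
  finally show ?thesis .
qed

end

lemma coeff_sum: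
  fixes \<mu> \<tau> :: "nat \<Rightarrow> complex"
  assumes t0: "\<tau> 0 = 0"
  shows "(\<Sum>p<n. \<Sum>j\<le>n - 1 - p. \<mu> (p + j) * \<tau> (Suc (n - 1 - p) - j)) =
    (fps_deriv (fps_X * Abs_fps \<mu>) * Abs_fps \<tau>) $ n"
proof -
  have "(\<Sum>p<n. \<Sum>j\<le>n - 1 - p. \<mu> (p + j) * \<tau> (Suc (n - 1 - p) - j)) =
      (\<Sum>p<n. \<Sum>j\<le>n - 1 - p. \<mu> (p + j) * \<tau> (n - (p + j)))"
    by (rule sum.cong[OF refl], rule sum.cong[OF refl]) auto
  also have "\<dots> = (\<Sum>(p, j)\<in>Sigma {..<n} (\<lambda>p. {..n - 1 - p}). \<mu> (p + j) * \<tau> (n - (p + j)))"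
    by (rule sum.Sigma) auto
  also have "Sigma {..<n} (\<lambda>p. {..n - 1 - p}) = {(p, j). p + j < n}" by auto
  also have "(\<Sum>(p, j)\<in>{(p, j). p + j < n}. \<mu> (p + j) * \<tau> (n - (p + j))) =
      (\<Sum>k<n. \<Sum>i\<le>k. \<mu> (i + (k - i)) * \<tau> (n - (i + (k - i))))"
    by (rule sum.triangle_reindex)
  also have "\<dots> = (\<Sum>k<n. of_nat (Suc k) * \<mu> k * \<tau> (n - k))"
    by (rule sum.cong[OF refl]) simp
  also have "\<dots> = (\<Sum>k\<le>n. of_nat (Suc k) * \<mu> k * \<tau> (n - k))"
    using t0 by (simp add: lessThan_Suc_atMost[symmetric])
  also have "\<dots> = (fps_deriv (fps_X * Abs_fps \<mu>) * Abs_fps \<tau>) $ n"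
  proof -
    have d: "fps_deriv (fps_X * Abs_fps \<mu>) $ i = of_nat (Suc i) * \<mu> i" for i
      by (simp only: fps_deriv_nth fps_X_mult_nth) simp
    show ?thesis by (simp only: fps_mult_nth atLeast0AtMost d fps_nth_Abs_fps)
  qed
  finally show ?thesis .
qed


lemma gf_fls:
  fixes Mf Th E :: "complex fps"
  assumes M0: "Mf $ 0 = 1" and ThM: "Th * Mf = E oo (fps_X * Mf)"
  shows "fps_to_fls (fps_X * (fps_deriv (fps_X*Mf) * Th)) =
     fps_to_fls ((fps_X * E) oo (fps_X*Mf)) * deriv_z (inverse (fps_to_fls (fps_X * Mf)))"
proof -
  define G where "G = fps_X * Mf"
  define g where "g = fps_to_fls G"
  define m where "m = fps_to_fls Mf"
  define th where "th = fps_to_fls Th"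
  define g' where "g' = fps_to_fls (fps_deriv G)"
  have G0: "G $ 0 = 0" by (simp add: G_def)
  have m0: "m \<noteq> 0" using M0 by (auto simp: m_def)
  have gm: "g = fls_X * m" by (simp add: g_def G_def m_def fls_times_fps_to_fls)
  have g0: "g \<noteq> 0" using m0 by (simp add: gm)
  have "fls_deriv (inverse g * g) = 0" using g0 by simp
  hence "inverse g * fls_deriv g + fls_deriv (inverse g) * g = 0" by simp
  hence "fls_deriv (inverse g) * g = - (inverse g * fls_deriv g)"
    by (metis add.commute add_eq_0_iff)
  hence dinv: "fls_deriv (inverse g) = - inverse g * fls_deriv g / g" using g0
    by (metis minus_mult_left nonzero_eq_divide_eq)
  have dg: "fls_deriv g = g'" by (simp add: g_def g'_def fls_deriv_fps_to_fls)
  have comp: "(fps_X * E) oo G = G * (Th * Mf)"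
    using ThM G0 by (simp add: fps_compose_mult_distrib G_def)
  have "fps_to_fls ((fps_X * E) oo G) = g * th * m"
    by (simp add: comp g_def th_def m_def fls_times_fps_to_fls mult.assoc)
  moreover have "deriv_z (inverse g) = fls_X^2 * g' * inverse g / g"
    by (simp add: deriv_z_def dinv dg)
  moreover have "fps_to_fls (fps_X * (fps_deriv G * Th)) = fls_X * g' * th"
    by (simp add: g'_def th_def fls_times_fps_to_fls)
  ultimately show ?thesis unfolding G_def[symmetric] g_def[symmetric]
    using g0 m0 by (simp add: gm field_simps power2_eq_square)
qed

theorem corollary3p4:
  fixes sA :: "complex \<Rightarrow> 'a::ring_1 \<Rightarrow> 'a" and sF :: "complex \<Rightarrow> 'f::ring \<Rightarrow> 'f"
    and lA :: "'a \<Rightarrow> 'f \<Rightarrow> 'f" and rA :: "'f \<Rightarrow> 'a \<Rightarrow> 'f"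
    and \<phi> :: "'a \<Rightarrow> complex" and \<Phi> :: "'f \<Rightarrow> complex"
    and a1 a2 :: 'a and f1 f2 :: 'f
    and \<mu>1 \<mu>2 \<nu>1 \<nu>2 :: "nat \<Rightarrow> complex"
  assumes ncps: "ncps_B' sA sF lA rA \<phi> \<Phi>"
    and free: "B'_free sA sF lA rA \<phi> \<Phi> {1::nat, 2}
                 (\<lambda>i. unital_alg_gen sA {if i = 1 then a1 else a2}) {1::nat, 2}
                 (\<lambda>j. alg_gen sF {if j = 1 then f1 else f2})"
    and \<mu>1: "\<mu>1 = distA \<phi> a1" and \<mu>2: "\<mu>2 = distA \<phi> a2"
    and \<nu>1: "\<nu>1 = distB lA rA (phiB' \<Phi>) (0, f1)"
    and \<nu>2: "\<nu>2 = distB lA rA (phiB' \<Phi>) (0, f2)"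
  shows "let \<mu> = distA \<phi> (a1 + a2);  \<comment> \<open>= \<mu>1 \<boxplus> \<mu>2, by definition of free convolution\<close>
             b = (a1 + a2, f1 + f2);  \<comment> \<open>b_1 + b_2 in B\<close>
             \<nu> = distB lA rA (phiB' \<Phi>) b
         in distB lA rA (phiB \<phi>) b = \<mu> \<and>
            G_ser \<nu> = G_comp (\<lambda>n. \<nu>1 n + \<nu>2 n) (F_ser \<mu>) * deriv_z (F_ser \<mu>)"
  proof -
  interpret BP sA sF lA rA \<phi> \<Phi> by (rule BP.intro[OF ncps])
  define a where "a = a1 + a2"
  define f where "f = f1 + f2"
  define A0 where "A0 = unital_alg_gen sA (\<Union>i\<in>{1::nat, 2}. unital_alg_gen sA {if i = 1 then a1 else a2})"
  define F0 where "F0 = alg_gen sF (\<Union>j\<in>{1::nat, 2}. alg_gen sF {if j = 1 then f1 else f2})"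
  define Fs where "Fs = (\<lambda>j::nat. alg_gen sF {if j = 1 then f1 else f2})"
  have ug_sub: "X \<subseteq> unital_alg_gen s X" for s and X :: "'a set" by (auto simp: unital_alg_gen_def)
  have ug_1: "(1::'a) \<in> unital_alg_gen s X" for s X by (auto simp: unital_alg_gen_def unital_subalg_def)
  have ug_add: "x + y \<in> unital_alg_gen s X" if "x \<in> unital_alg_gen s X" "y \<in> unital_alg_gen s X"
    for s X and x y :: 'a using that by (auto simp: unital_alg_gen_def unital_subalg_def)
  have ug_mul: "x * y \<in> unital_alg_gen s X" if "x \<in> unital_alg_gen s X" "y \<in> unital_alg_gen s X"
    for s X and x y :: 'a using that by (auto simp: unital_alg_gen_def unital_subalg_def)
  have ag_sub: "X \<subseteq> alg_gen s X" for s and X :: "'f set" by (auto simp: alg_gen_def)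
  have ag_add: "x + y \<in> alg_gen s X" if "x \<in> alg_gen s X" "y \<in> alg_gen s X"
    for s X and x y :: 'f using that by (auto simp: alg_gen_def subalg_def)
  have ag_mul: "x * y \<in> alg_gen s X" if "x \<in> alg_gen s X" "y \<in> alg_gen s X"
    for s X and x y :: 'f using that by (auto simp: alg_gen_def subalg_def)
  have a1A: "a1 \<in> A0" unfolding A0_def
    by (rule subsetD[OF ug_sub]) (rule UN_I[of 1], simp, rule subsetD[OF ug_sub], simp)
  have a2A: "a2 \<in> A0" unfolding A0_def
    by (rule subsetD[OF ug_sub]) (rule UN_I[of 2], simp, rule subsetD[OF ug_sub], simp)
  have aA: "a ^ j \<in> A0" for j
  proof (induction j)
    case 0 then show ?case by (simp add: A0_def ug_1)
  next
    case (Suc j)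
    have A0mul: "x \<in> A0 \<Longrightarrow> y \<in> A0 \<Longrightarrow> x * y \<in> A0" for x y unfolding A0_def by (rule ug_mul)
    have aA0: "a \<in> A0" using a1A a2A unfolding a_def A0_def by (rule ug_add)
    show ?case unfolding power_Suc by (rule A0mul[OF aA0 Suc])
  qed
  have f1F: "f1 \<in> F0" unfolding F0_def
    by (rule subsetD[OF ag_sub]) (rule UN_I[of 1], simp, rule subsetD[OF ag_sub], simp)
  have f2F: "f2 \<in> F0" unfolding F0_def
    by (rule subsetD[OF ag_sub]) (rule UN_I[of 2], simp, rule subsetD[OF ag_sub], simp)
  have fF: "f \<in> F0" using f1F f2F unfolding f_def F0_def by (rule ag_add)
  have f1s: "f1 \<in> Fs 1" by (auto simp: Fs_def intro: subsetD[OF ag_sub])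
  have f2s: "f2 \<in> Fs 2" by (auto simp: Fs_def intro: subsetD[OF ag_sub])
  have cl: "\<And>j x y. x \<in> Fs j \<Longrightarrow> y \<in> Fs j \<Longrightarrow> x * y \<in> Fs j" unfolding Fs_def by (rule ag_mul)
  have fr2: "\<forall>cs gs. gs \<noteq> [] \<and> length cs = Suc (length gs) \<and> set cs \<subseteq> A0 \<and> set gs \<subseteq> F0 \<longrightarrow>
        \<Phi> (snd (prodB lA rA (interleave cs gs))) =
          \<phi> (hd cs * last cs) * (\<Prod>l \<in> {1..<length gs}. \<phi> (cs ! l)) *
          \<Phi> (snd (prodB lA rA (map (\<lambda>g. (0, g)) gs)))"
    using free unfolding B'_free_def Let_def A0_def F0_def by blast
  have fr3: "\<forall>js gs. length gs = length js \<and> length gs \<ge> 2 \<and> set js \<subseteq> {1, 2} \<and> alternating js \<and>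
        (\<forall>l < length gs. gs ! l \<in> Fs (js ! l))
        \<longrightarrow> \<Phi> (snd (prodB lA rA (map (\<lambda>g. (0, g)) gs))) = 0"
    using free unfolding B'_free_def Fs_def by blast
  have frii: "\<And>cs gs. gs \<noteq> [] \<Longrightarrow> length cs = Suc (length gs) \<Longrightarrow> set cs \<subseteq> A0 \<Longrightarrow> set gs \<subseteq> F0 \<Longrightarrow>
      \<Phi> (snd (prodB lA rA (interleave cs gs))) =
        \<phi> (hd cs * last cs) * (\<Prod>l\<in>{1..<length gs}. \<phi> (cs ! l)) * \<Phi> (sp gs)"
    using fr2 by blast
  have triv: "\<And>js gs. length gs = length js \<Longrightarrow> 2 \<le> length gs \<Longrightarrow> set js \<subseteq> {1, 2} \<Longrightarrow>
      alternating js \<Longrightarrow> (\<forall>l<length gs. gs ! l \<in> Fs (js ! l)) \<Longrightarrow> \<Phi> (sp gs) = 0"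
    using fr3 by blast
  define \<mu> where "\<mu> = distA \<phi> a"
  define \<eta> where "\<eta> = (\<lambda>n. \<nu>1 n + \<nu>2 n)"
  define \<nu> where "\<nu> = distB lA rA (phiB' \<Phi>) (a, f)"
  define tau where "tau = (\<lambda>r. \<Sum>M\<le>r. t2 (\<lambda>j. \<phi> (a ^ j)) r M * \<Phi> (sp (replicate M f)))"
  have \<mu>_eq: "\<mu> = (\<lambda>j. \<phi> (a ^ j))" by (simp add: \<mu>_def distA_def)
  have spv: "\<Phi> (snd (powB lA rA (0, g) M)) = \<Phi> (sp (replicate M g))" for g M
    by (simp add: powB_prod map_replicate)
  have eta_eq: "\<Phi> (sp (replicate M f)) = \<eta> M" for M
    using eta_lemma[OF triv cl f1s f2s, where M=M]
    by (simp add: \<eta>_def \<nu>1 \<nu>2 distB_def phiB'_def spv f_def)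
  have tau_eq: "tau = (\<lambda>r. \<Sum>M\<le>r. t2 \<mu> r M * \<eta> M)" by (simp only: tau_def eta_eq \<mu>_eq)
  have \<eta>0: "\<eta> 0 = 0" by (simp add: \<eta>_def \<nu>1 \<nu>2 distB_def phiB'_def oneB_def)
  have tau0: "tau 0 = 0" by (simp add: tau_def t2_0)
  have nu_eq: "Abs_fps \<nu> = fps_deriv (fps_X * Abs_fps \<mu>) * Abs_fps tau"
  proof (rule fps_ext)
    fix n
    have "\<nu> n = \<Phi> (snd (powB lA rA (a, f) n))" by (simp add: \<nu>_def distB_def phiB'_def)
    also have "\<dots> = (\<Sum>p<n. \<Sum>j\<le>n - 1 - p. \<mu> (p + j) * tau (Suc (n - 1 - p) - j))"
      unfolding \<mu>_eq tau_def by (rule nu_formula[OF frii aA fF])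
    also have "\<dots> = (fps_deriv (fps_X * Abs_fps \<mu>) * Abs_fps tau) $ n"
      by (rule coeff_sum[where \<tau>=tau, OF tau0])
    finally show "Abs_fps \<nu> $ n = (fps_deriv (fps_X * Abs_fps \<mu>) * Abs_fps tau) $ n" by simp
  qed
  have ThM: "Abs_fps tau * Abs_fps \<mu> = Abs_fps \<eta> oo (fps_X * Abs_fps \<mu>)"
    unfolding tau_eq by (rule tau_coeff[where \<eta>=\<eta>, OF \<eta>0])
  have M0: "Abs_fps \<mu> $ 0 = 1" by (simp add: \<mu>_eq phi_1)
  have main: "fps_to_fls (fps_X * (fps_deriv (fps_X * Abs_fps \<mu>) * Abs_fps tau)) =
     fps_to_fls ((fps_X * Abs_fps \<eta>) oo (fps_X * Abs_fps \<mu>)) *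
     deriv_z (inverse (fps_to_fls (fps_X * Abs_fps \<mu>)))"
    by (rule gf_fls[OF M0 ThM])
  have part2: "G_ser \<nu> = G_comp \<eta> (F_ser \<mu>) * deriv_z (F_ser \<mu>)"
    using main by (simp add: G_ser_def G_fps_def nu_eq G_comp_def F_ser_def)
  have part1: "distB lA rA (phiB \<phi>) (a, f) = \<mu>"
    by (rule ext) (simp add: distB_def phiB_def powB_fst \<mu>_def distA_def)
  show ?thesis
    using part1 part2 unfolding Let_def \<nu>_def \<eta>_def \<mu>_def a_def f_def by simp
qed

end
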